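(* Let $B$ be a finite set of spins and let $w_{i,j}=w_{j,i}\ge 0$ (for distinct $i,j\in B$) be interaction strengths. For a cluster $\mathcal S\subseteq B$ with $|\mathcal S|\ge 2$, define its heuristic strength $s(\mathcal S)$ as the largest value $s\in\{w_{i,j}: i,j\in\mathcal S, i\ne j\}$ such that the graph on vertex set $\mathcal S$ with edges $\{\{i,j\}: i,j\in\mathcal S,\ w_{i,j}\ge s\}$ is connected (equivalently, the smallest interaction necessary to complete the connectivity of $\mathcal S$ when interactions among its spins are added in order of decreasing strength); for $|\mathcal S|=1$ set $s(\mathcal S)=+\infty$. Then for any cluster $\mathcal S$ with $|\mathcal S|\ge 2$ and any spin $i\in\mathcal S$, there exists a sub-cluster $\mathcal C\subseteq\mathcal S$ with $i\in\mathcal C$, $|\mathcal C|=|\mathcal S|-1$, and $s(\mathcal C)\ge s(\mathcal S)$.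
   Context: Clusters are arbitrary subsets of spins; "sub-cluster" means subset. *)

theory Defs
  imports Complex_Main "HOL-Library.Extended_Real"
begin

definition thr_edges :: "('a \<Rightarrow> 'a \<Rightarrow> real) \<Rightarrow> 'a set \<Rightarrow> real \<Rightarrow> ('a \<times> 'a) set" where
  "thr_edges w S s = {(i, j). i \<in> S \<and> j \<in> S \<and> i \<noteq> j \<and> w i j \<ge> s}"

definition thr_connected :: "('a \<Rightarrow> 'a \<Rightarrow> real) \<Rightarrow> 'a set \<Rightarrow> real \<Rightarrow> bool" where
  "thr_connected w S s \<longleftrightarrow> (\<forall>x\<in>S. \<forall>y\<in>S. (x, y) \<in> (thr_edges w S s)\<^sup>*)"

definition inner_weights :: "('a \<Rightarrow> 'a \<Rightarrow> real) \<Rightarrow> 'a set \<Rightarrow> real set" where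
  "inner_weights w S = {w i j | i j. i \<in> S \<and> j \<in> S \<and> i \<noteq> j}"

definition strength :: "('a \<Rightarrow> 'a \<Rightarrow> real) \<Rightarrow> 'a set \<Rightarrow> ereal" where
  "strength w S = (if card S = 1 then \<infinity>
     else ereal (Max {s \<in> inner_weights w S. thr_connected w S s}))"

end

theory Submission
  imports Defs
begin

lemma far_vertex:
  assumes fin: "finite S" and iS: "i \<in> S" and card: "card S \<ge> 2"
    and RS: "R \<subseteq> S \<times> S" and conn: "\<forall>v\<in>S. (i,v) \<in> R\<^sup>*"
  shows "\<exists>j\<in>S. j \<noteq> i \<and> (\<forall>v\<in>S-{j}. (i,v) \<in> (R \<inter> (S-{j}) \<times> (S-{j}))\<^sup>*)"
proof -
  define d where "d v = (LEAST n. (i,v) \<in> R^^n)" for v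
  have dex: "(i,v) \<in> R^^(d v)" if "v\<in>S" for v
  proof -
    from conn that have "\<exists>n. (i,v) \<in> R^^n" using rtrancl_power by blast
    then show ?thesis unfolding d_def by (rule LeastI_ex)
  qed
  have dle: "d v \<le> n" if "(i,v) \<in> R^^n" for v n
    unfolding d_def using that by (rule Least_le)
  have ne: "S \<noteq> {}" using iS by auto
  have "Max (d ` S) \<in> d ` S"
    using Max_in[of "d ` S"] fin ne by auto
  then obtain j where jS: "j \<in> S" and jd: "d j = Max (d ` S)" by auto
  have jmax: "d v \<le> d j" if "v \<in> S" for v
    using jd fin that by simp
  have ji: "j \<noteq> i"
  proof
    assume "j = i"
    have "d i = 0" using dle[of i 0] by simp
    then have "\<forall>v\<in>S. v = i" using jmax dex \<open>j = i\<close> by fastforce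
    then have "S \<subseteq> {i}" by auto
    then have "card S \<le> 1" using card_mono[OF _ \<open>S \<subseteq> {i}\<close>] by simp
    with card show False by simp
  qed
  define R' where "R' = R \<inter> (S-{j}) \<times> (S-{j})"
  have key: "\<forall>v. v\<in>S \<longrightarrow> v\<noteq>j \<longrightarrow> d v = n \<longrightarrow> (i,v) \<in> R'\<^sup>*" for n
  proof (induction n)
    case 0
    show ?case
    proof (intro allI impI)
      fix v assume "v \<in> S" "v \<noteq> j" "d v = 0"
      then have "(i,v) \<in> R^^0" using dex[of v] by simp
      then show "(i,v) \<in> R'\<^sup>*" by simp
    qed
  next
    case (Suc m)
    show ?case
    proof (intro allI impI)
      fix v assume vS: "v \<in> S" and vj: "v \<noteq> j" and dv: "d v = Suc m"
      from dex[OF vS] dv obtain u where iu: "(i,u) \<in> R^^m" and uv: "(u,v) \<in> R"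
        by (metis relpow_Suc_E)
      have uS: "u \<in> S" using uv RS by auto
      have "d u \<le> m" using dle iu by blast
      moreover have "(i,v) \<in> R^^(Suc (d u))" using dex[OF uS] uv by (rule relpow_Suc_I)
      then have "Suc m \<le> Suc (d u)" using dle dv by metis
      ultimately have du: "d u = m" by simp
      have "u \<noteq> j" using du dv jmax[OF vS] by auto
      then have "(i,u) \<in> R'\<^sup>*" using Suc.IH uS du by blast
      moreover have "(u,v) \<in> R'" unfolding R'_def using uv uS vS \<open>u \<noteq> j\<close> vj by auto
      ultimately show "(i,v) \<in> R'\<^sup>*" by (rule rtrancl_into_rtrancl)
    qed
  qed
  have "\<forall>v\<in>S-{j}. (i,v) \<in> R'\<^sup>*"
  proof
    fix v assume "v \<in> S-{j}"
    then show "(i,v) \<in> R'\<^sup>*" using key[of "d v"] by simp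
  qed
  then show ?thesis using jS ji unfolding R'_def by blast
qed

lemma strength_ge:
  assumes fin: "finite C" and ne: "C \<noteq> {}" and conn: "thr_connected w C s"
  shows "strength w C \<ge> ereal s"
proof (cases "card C = 1")
  case True then show ?thesis by (simp add: strength_def)
next
  case False
  with fin ne have "card C \<ge> 2"
  proof -
    have "card C > 0" using fin ne by (simp add: card_gt_0_iff)
    then show ?thesis using False by linarith
  qed
  then obtain x y where xy: "x \<in> C" "y \<in> C" "x \<noteq> y"
  proof -
    have "\<not> card C \<le> Suc 0" using \<open>card C \<ge> 2\<close> by simp
    then have "\<exists>a\<in>C. \<exists>b\<in>C. a \<noteq> b" using card_le_Suc0_iff_eq[OF fin] by simp
    then show thesis using that by blast
  qed
  have "(x,y) \<in> (thr_edges w C s)\<^sup>*" using conn xy unfolding thr_connected_def by blast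
  then obtain z where "(x,z) \<in> thr_edges w C s" using xy(3)
    by (metis converse_rtranclE)
  then have xz: "x \<in> C" "z \<in> C" "x \<noteq> z" "w x z \<ge> s" unfolding thr_edges_def by auto
  define T where "T = {t \<in> inner_weights w C. t \<ge> s}"
  have finIW: "finite (inner_weights w C)"
  proof -
    have "inner_weights w C \<subseteq> (\<lambda>(i,j). w i j) ` (C \<times> C)"
      unfolding inner_weights_def by auto
    then show ?thesis using fin finite_subset by blast
  qed
  have "w x z \<in> T" unfolding T_def inner_weights_def using xz by blast
  then have Tne: "T \<noteq> {}" by auto
  have finT: "finite T" unfolding T_def using finIW by simp
  define t where "t = Min T"
  have tT: "t \<in> T" unfolding t_def using Tne finT by simp
  have eq: "thr_edges w C t = thr_edges w C s"
  proof
    show "thr_edges w C t \<subseteq> thr_edges w C s" using tT unfolding T_def thr_edges_def by auto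
  next
    show "thr_edges w C s \<subseteq> thr_edges w C t"
    proof
      fix p assume p: "p \<in> thr_edges w C s"
      then obtain a b where pab: "p = (a,b)" "a \<in> C" "b \<in> C" "a \<noteq> b" "w a b \<ge> s"
        unfolding thr_edges_def by auto
      then have "w a b \<in> T" unfolding T_def inner_weights_def by blast
      then have "t \<le> w a b" unfolding t_def using finT by simp
      then show "p \<in> thr_edges w C t" using pab unfolding thr_edges_def by auto
    qed
  qed
  have ct: "thr_connected w C t" using conn unfolding thr_connected_def eq .
  define M where "M = {s \<in> inner_weights w C. thr_connected w C s}"
  have "t \<in> M" using tT ct unfolding M_def T_def by auto
  moreover have "finite M" unfolding M_def using finIW by simp
  ultimately have "t \<le> Max M" by simp
  moreover have "s \<le> t" using tT unfolding T_def by simp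
  ultimately show ?thesis using False unfolding strength_def M_def by simp
qed

theorem theorem2:
  fixes B :: "'a set" and w :: "'a \<Rightarrow> 'a \<Rightarrow> real" and S :: "'a set" and i :: 'a
  assumes "finite B"
    and "\<forall>x\<in>B. \<forall>y\<in>B. x \<noteq> y \<longrightarrow> w x y = w y x \<and> w x y \<ge> 0"
    and "S \<subseteq> B" and "card S \<ge> 2" and "i \<in> S"
  shows "\<exists>C. C \<subseteq> S \<and> i \<in> C \<and> card C = card S - 1 \<and> strength w C \<ge> strength w S"
proof -
  have fin: "finite S" using assms(1,3) finite_subset by blast
  have symw: "w x y = w y x" if "x \<in> S" "y \<in> S" "x \<noteq> y" for x y
    using assms(2,3) that by auto
  have finIW: "finite (inner_weights w S)"
  proof -
    have "inner_weights w S \<subseteq> (\<lambda>(i,j). w i j) ` (S \<times> S)"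
      unfolding inner_weights_def by auto
    then show ?thesis using fin finite_subset by blast
  qed
  obtain x y where xy: "x \<in> S" "y \<in> S" "x \<noteq> y"
  proof -
    have "\<not> card S \<le> Suc 0" using assms(4) by simp
    then have "\<exists>a\<in>S. \<exists>b\<in>S. a \<noteq> b" using card_le_Suc0_iff_eq[OF fin] by simp
    then show thesis using that by blast
  qed
  define M where "M = {s \<in> inner_weights w S. thr_connected w S s}"
  have IWne: "inner_weights w S \<noteq> {}" using xy unfolding inner_weights_def by blast
  define m where "m = Min (inner_weights w S)"
  have "thr_connected w S m"
    unfolding thr_connected_def
  proof (intro ballI)
    fix a b assume ab: "a \<in> S" "b \<in> S"
    show "(a,b) \<in> (thr_edges w S m)\<^sup>*"
    proof (cases "a = b")
      case False
      have "w a b \<in> inner_weights w S" using ab False unfolding inner_weights_def by blast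
      then have "m \<le> w a b" unfolding m_def using finIW by simp
      then have "(a,b) \<in> thr_edges w S m" using ab False unfolding thr_edges_def by auto
      then show ?thesis by blast
    qed simp
  qed
  moreover have "m \<in> inner_weights w S" unfolding m_def using finIW IWne by simp
  ultimately have "m \<in> M" unfolding M_def by simp
  then have Mne: "M \<noteq> {}" by auto
  have finM: "finite M" unfolding M_def using finIW by simp
  define s where "s = Max M"
  have sM: "s \<in> M" unfolding s_def using finM Mne by simp
  have card1: "card S \<noteq> 1" using assms(4) by simp
  have strS: "strength w S = ereal s" unfolding strength_def s_def M_def using card1 by simp
  have cs: "thr_connected w S s" using sM unfolding M_def by simp
  define R where "R = thr_edges w S s"
  have RS: "R \<subseteq> S \<times> S" unfolding R_def thr_edges_def by auto
  have conn: "\<forall>v\<in>S. (i,v) \<in> R\<^sup>*" using cs assms(5) unfolding R_def thr_connected_def by blast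
  obtain j where jS: "j \<in> S" and ji: "j \<noteq> i"
    and cj: "\<forall>v\<in>S-{j}. (i,v) \<in> (R \<inter> (S-{j}) \<times> (S-{j}))\<^sup>*"
    using far_vertex[OF fin assms(5) assms(4) RS conn] by blast
  define C where "C = S - {j}"
  have RC: "R \<inter> C \<times> C = thr_edges w C s" unfolding R_def C_def thr_edges_def by auto
  have symE: "(b,a) \<in> thr_edges w C s" if "(a,b) \<in> thr_edges w C s" for a b
    using that symw unfolding thr_edges_def C_def by auto
  have ci: "\<forall>v\<in>C. (i,v) \<in> (thr_edges w C s)\<^sup>*"
  proof
    fix v assume "v \<in> C"
    then have "(i,v) \<in> (R \<inter> C \<times> C)\<^sup>*" using cj unfolding C_def by blast
    then show "(i,v) \<in> (thr_edges w C s)\<^sup>*" unfolding RC .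
  qed
  have ci': "(v,i) \<in> (thr_edges w C s)\<^sup>*" if "v \<in> C" for v
  proof -
    have "(i,v) \<in> (thr_edges w C s)\<^sup>*" using ci that by blast
    then show ?thesis
    proof (induction rule: rtrancl_induct)
      case (step y z)
      show ?case by (rule converse_rtrancl_into_rtrancl[OF symE[OF step(2)] step(3)])
    qed simp
  qed
  have "thr_connected w C s" unfolding thr_connected_def
  proof (intro ballI)
    fix a b assume ab: "a \<in> C" "b \<in> C"
    have "(i,b) \<in> (thr_edges w C s)\<^sup>*" using ci ab(2) by blast
    then show "(a,b) \<in> (thr_edges w C s)\<^sup>*" by (rule rtrancl_trans[OF ci'[OF ab(1)]])
  qed
  moreover have "finite C" "C \<noteq> {}" using fin assms(5) ji unfolding C_def by auto
  ultimately have "strength w C \<ge> ereal s" using strength_ge by blast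
  moreover have "card C = card S - 1" unfolding C_def using fin jS by simp
  moreover have "C \<subseteq> S" "i \<in> C" unfolding C_def using assms(5) ji by auto
  ultimately show ?thesis unfolding strS by blast
qed

end
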